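(* A linear operator $\mathcal A$ on a semiunitary space $U$ is selfadjoint (i.e. $\langle\mathcal Au,v\rangle=\langle u,\mathcal Av\rangle$ for all $u,v\in U$) if and only if it is bounded and the induced operator $\mathcal A_1$ on the unitary space $U/U_0$ is selfadjoint. Likewise, $\mathcal A$ is metric (i.e. $\langle\mathcal Au,\mathcal Av\rangle=\langle u,v\rangle$ for all $u,v\in U$) if and only if it is bounded and $\mathcal A_1$ is metric.
   Context: A semiunitary space is a finite-dimensional complex vector space $U$ with a positive semidefinite Hermitian form $\langle\cdot,\cdot\rangle$; $\|u\|=\sqrt{\langle u,u\rangle}$; $U_0=\{u:\langle u,u\rangle=0\}$, and $U/U_0$ carries the inner product $\langle u+U_0,v+U_0\rangle=\langle u,v\rangle$. An operator is bounded if $\|\mathcal Au\|\le c\|u\|$ for some real $c>0$ and all $u$; then $U_0$ is invariant and $\mathcal A_1(u+U_0):=\mathcal Au+U_0$. *)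

theory Defs
  imports "HOL-Analysis.Analysis"
begin

text \<open>A finite-dimensional complex vector space is modelled as complex ^ 'n
 (every such space is isomorphic to one of these).\<close>

definition semiunitary :: "(complex^'n \<Rightarrow> complex^'n \<Rightarrow> complex) \<Rightarrow> bool" where
  "semiunitary h \<longleftrightarrow>
     (\<forall>x y z. h (x + y) z = h x z + h y z) \<and>
     (\<forall>c x y. h (c *s x) y = c * h x y) \<and>
     (\<forall>x y. h y x = cnj (h x y)) \<and>
     (\<forall>x. 0 \<le> Re (h x x))"

definition snorm :: "(complex^'n \<Rightarrow> complex^'n \<Rightarrow> complex) \<Rightarrow> complex^'n \<Rightarrow> real" where
  "snorm h u = sqrt (Re (h u u))"

definition null_space :: "(complex^'n \<Rightarrow> complex^'n \<Rightarrow> complex) \<Rightarrow> (complex^'n) set" where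
  "null_space h = {u. h u u = 0}"

definition clinear_op :: "(complex^'n \<Rightarrow> complex^'n) \<Rightarrow> bool" where
  "clinear_op A \<longleftrightarrow> Vector_Spaces.linear ((*s) :: complex \<Rightarrow> complex^'n \<Rightarrow> complex^'n) (*s) A"

definition bounded_op :: "(complex^'n \<Rightarrow> complex^'n \<Rightarrow> complex) \<Rightarrow> (complex^'n \<Rightarrow> complex^'n) \<Rightarrow> bool" where
  "bounded_op h A \<longleftrightarrow> (\<exists>c::real. c > 0 \<and> (\<forall>u. snorm h (A u) \<le> c * snorm h u))"

definition selfadjoint_op :: "(complex^'n \<Rightarrow> complex^'n \<Rightarrow> complex) \<Rightarrow> (complex^'n \<Rightarrow> complex^'n) \<Rightarrow> bool" where
  "selfadjoint_op h A \<longleftrightarrow> (\<forall>u v. h (A u) v = h u (A v))"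

definition metric_op :: "(complex^'n \<Rightarrow> complex^'n \<Rightarrow> complex) \<Rightarrow> (complex^'n \<Rightarrow> complex^'n) \<Rightarrow> bool" where
  "metric_op h A \<longleftrightarrow> (\<forall>u v. h (A u) (A v) = h u v)"

definition coset :: "(complex^'n \<Rightarrow> complex^'n \<Rightarrow> complex) \<Rightarrow> complex^'n \<Rightarrow> (complex^'n) set" where
  "coset h u = {u + w | w. w \<in> null_space h}"

definition quotient_space :: "(complex^'n \<Rightarrow> complex^'n \<Rightarrow> complex) \<Rightarrow> (complex^'n) set set" where
  "quotient_space h = range (coset h)"

definition quot_form :: "(complex^'n \<Rightarrow> complex^'n \<Rightarrow> complex) \<Rightarrow> (complex^'n) set \<Rightarrow> (complex^'n) set \<Rightarrow> complex" where
  "quot_form h X Y = h (SOME u. u \<in> X) (SOME v. v \<in> Y)"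

definition induced_op :: "(complex^'n \<Rightarrow> complex^'n \<Rightarrow> complex) \<Rightarrow> (complex^'n \<Rightarrow> complex^'n) \<Rightarrow> (complex^'n) set \<Rightarrow> (complex^'n) set" where
  "induced_op h A X = coset h (A (SOME u. u \<in> X))"

definition quot_selfadjoint :: "(complex^'n \<Rightarrow> complex^'n \<Rightarrow> complex) \<Rightarrow> ((complex^'n) set \<Rightarrow> (complex^'n) set) \<Rightarrow> bool" where
  "quot_selfadjoint h B \<longleftrightarrow>
     (\<forall>X\<in>quotient_space h. \<forall>Y\<in>quotient_space h. quot_form h (B X) Y = quot_form h X (B Y))"

definition quot_metric :: "(complex^'n \<Rightarrow> complex^'n \<Rightarrow> complex) \<Rightarrow> ((complex^'n) set \<Rightarrow> (complex^'n) set) \<Rightarrow> bool" where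
  "quot_metric h B \<longleftrightarrow>
     (\<forall>X\<in>quotient_space h. \<forall>Y\<in>quotient_space h. quot_form h (B X) (B Y) = quot_form h X Y)"

end

theory Submission
  imports Defs
begin

locale su_ctx = fixes h :: "complex^'n \<Rightarrow> complex^'n \<Rightarrow> complex"
  assumes su: "semiunitary h"
begin

lemma h_addL: "h (x + y) z = h x z + h y z" using su unfolding semiunitary_def by blast
lemma h_scaleL: "h (c *s x) y = c * h x y" using su unfolding semiunitary_def by blast
lemma h_herm: "h y x = cnj (h x y)" using su unfolding semiunitary_def by blast
lemma h_pos: "0 \<le> Re (h x x)" using su unfolding semiunitary_def by blast

lemma h_addR: "h z (x + y) = h z x + h z y"
  using h_herm h_addL by (metis complex_cnj_add)
lemma h_scaleR: "h y (c *s x) = cnj c * h y x"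
  by (subst (1 2) h_herm) (simp add: h_scaleL)
lemma h_zeroL: "h 0 y = 0"
  using h_scaleL[of 0 y y] by simp
lemma h_zeroR: "h y 0 = 0"
  using h_scaleR[of y 0 y] by simp
lemma h_minusL: "h (- x) y = - h x y"
  using h_scaleL[of "-1" x y] by simp
lemma h_minusR: "h y (- x) = - h y x"
  using h_scaleR[of y "-1" x] by simp
lemma h_diffL: "h (x - y) z = h x z - h y z"
  using h_addL[of x "-y" z] h_minusL by simp
lemma h_diffR: "h z (x - y) = h z x - h z y"
  using h_addR[of z x "-y"] h_minusR by simp
lemma h_real: "h x x = complex_of_real (Re (h x x))"
proof -
  have e: "h x x = cnj (h x x)" by (rule h_herm)
  have "Im (h x x) = Im (cnj (h x x))" using e by (rule arg_cong)
  then have "Im (h x x) = 0" by simp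
  then show ?thesis by (simp add: complex_eq_iff)
qed

lemma null_zero:
  assumes "h u u = 0" shows "h v u = 0"
proof (rule ccontr)
  assume a0: "h v u \<noteq> 0"
  define a where "a = h v u"
  define t where "t = (Re (h v v) + 1) / (2 * (cmod a)^2)"
  have apos: "cmod a > 0" using a0 a_def by simp
  define s where "s = complex_of_real t * a"
  have "h (v - s *s u) (v - s *s u) = h v v - cnj s * h v u - s * h u v + s * cnj s * h u u"
    by (simp add: h_diffL h_diffR h_scaleL h_scaleR algebra_simps)
  also have "\<dots> = h v v - cnj s * a - s * cnj a"
    using assms a_def h_herm[of u v] by simp
  also have "\<dots> = h v v - complex_of_real (2 * t * (cmod a)^2)"
  proof -
    have e: "a * cnj a = complex_of_real ((cmod a)^2)" by (rule complex_norm_square[symmetric])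
    have "cnj s * a + s * cnj a = complex_of_real (2 * t) * (a * cnj a)"
      unfolding s_def by (simp add: algebra_simps)
    then show ?thesis unfolding e by (simp add: algebra_simps)
  qed
  also have "2 * t * (cmod a)^2 = Re (h v v) + 1" unfolding t_def using apos by simp
  finally have "Re (h (v - s *s u) (v - s *s u)) = -1" by simp
  with h_pos show False by (metis neg_0_le_iff_le not_one_le_zero)
qed

lemma null_zero2: "h u u = 0 \<Longrightarrow> h u v = 0"
  using null_zero h_herm by (metis complex_cnj_zero)


lemma null_iff: "u \<in> null_space h \<longleftrightarrow> h u u = 0" unfolding null_space_def by simp

lemma h_shift: assumes "w \<in> null_space h" "w' \<in> null_space h"
  shows "h (x + w) (y + w') = h x y"
proof -
  have a: "h w w = 0" "h w' w' = 0" using assms by (simp_all add: null_iff)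
  have "h w y = 0" "h w w' = 0" using a(1) by (rule null_zero2)+
  moreover have "h x w' = 0" using a(2) by (rule null_zero)
  ultimately show ?thesis by (simp add: h_addL h_addR)
qed

lemma coset_mem: "x \<in> coset h x"
proof -
  have "0 \<in> null_space h" by (simp add: null_iff h_zeroL)
  then show ?thesis unfolding coset_def by (intro CollectI exI[of _ 0]) simp
qed

lemma coset_diff: "y \<in> coset h x \<Longrightarrow> y - x \<in> null_space h"
  unfolding coset_def by auto

lemma qf_coset: "quot_form h (coset h x) (coset h y) = h x y"
proof -
  define u where "u = (SOME u. u \<in> coset h x)"
  define v where "v = (SOME v. v \<in> coset h y)"
  have "u \<in> coset h x" "v \<in> coset h y" unfolding u_def v_def by (meson coset_mem someI)+
  then have "u - x \<in> null_space h" "v - y \<in> null_space h" using coset_diff by blast+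
  then have "h (x + (u - x)) (y + (v - y)) = h x y" by (rule h_shift)
  then show ?thesis unfolding quot_form_def u_def[symmetric] v_def[symmetric] by simp
qed

lemma induced_coset:
  assumes lin: "clinear_op A" and inv: "\<forall>u\<in>null_space h. A u \<in> null_space h"
  shows "\<exists>n\<in>null_space h. induced_op h A (coset h x) = coset h (A x + n)"
proof -
  have Ad: "A (a - b) = A a - A b" for a b
  proof -
    have "A (a - b + b) = A (a - b) + A b"
      using lin unfolding clinear_op_def Vector_Spaces.linear_def module_hom_def module_hom_axioms_def
      by blast
    then show ?thesis by (simp add: algebra_simps)
  qed
  define s where "s = (SOME u. u \<in> coset h x)"
  have "s \<in> coset h x" unfolding s_def by (meson coset_mem someI)
  then have "s - x \<in> null_space h" by (rule coset_diff)
  then have "A (s - x) \<in> null_space h" using inv by blast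
  then have "A s - A x \<in> null_space h" by (simp add: Ad)
  moreover have "induced_op h A (coset h x) = coset h (A x + (A s - A x))"
    unfolding induced_op_def s_def[symmetric] by simp
  ultimately show ?thesis by blast
qed

lemma quot_sa_iff:
  assumes lin: "clinear_op A" and inv: "\<forall>u\<in>null_space h. A u \<in> null_space h"
  shows "quot_selfadjoint h (induced_op h A) \<longleftrightarrow> selfadjoint_op h A"
proof -
  have e: "quot_form h (induced_op h A (coset h x)) (coset h y) = h (A x) y" for x y
  proof -
    obtain n where "n \<in> null_space h" "induced_op h A (coset h x) = coset h (A x + n)"
      using induced_coset[OF lin inv] by blast
    then show ?thesis using qf_coset h_shift[of n 0 "A x" y] null_iff h_zeroL by simp
  qed
  have e2: "quot_form h (coset h x) (induced_op h A (coset h y)) = h x (A y)" for x y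
  proof -
    obtain n where "n \<in> null_space h" "induced_op h A (coset h y) = coset h (A y + n)"
      using induced_coset[OF lin inv] by blast
    then show ?thesis using qf_coset h_shift[of 0 n x "A y"] null_iff h_zeroL by simp
  qed
  show ?thesis unfolding quot_selfadjoint_def selfadjoint_op_def quotient_space_def
    using e e2 by auto
qed

lemma quot_met_iff:
  assumes lin: "clinear_op A" and inv: "\<forall>u\<in>null_space h. A u \<in> null_space h"
  shows "quot_metric h (induced_op h A) \<longleftrightarrow> metric_op h A"
proof -
  have e: "quot_form h (induced_op h A (coset h x)) (induced_op h A (coset h y)) = h (A x) (A y)" for x y
  proof -
    obtain n where "n \<in> null_space h" "induced_op h A (coset h x) = coset h (A x + n)"
      using induced_coset[OF lin inv] by blast
    moreover obtain n' where "n' \<in> null_space h" "induced_op h A (coset h y) = coset h (A y + n')"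
      using induced_coset[OF lin inv] by blast
    ultimately show ?thesis using qf_coset h_shift[of n n' "A x" "A y"] by simp
  qed
  show ?thesis unfolding quot_metric_def metric_op_def quotient_space_def
    using e qf_coset by auto
qed

lemma bounded_inv: "bounded_op h A \<Longrightarrow> \<forall>u\<in>null_space h. A u \<in> null_space h"
proof
  fix u assume "bounded_op h A" "u \<in> null_space h"
  then obtain c where c: "c > 0" "snorm h (A u) \<le> c * snorm h u" unfolding bounded_op_def by blast
  have "snorm h u = 0" using \<open>u \<in> null_space h\<close> unfolding null_iff snorm_def by simp
  then have "snorm h (A u) \<le> 0" using c by simp
  then have "Re (h (A u) (A u)) \<le> 0" unfolding snorm_def by simp
  then have "Re (h (A u) (A u)) = 0" using h_pos[of "A u"] by linarith
  then have "h (A u) (A u) = 0" using h_real[of "A u"] by simp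
  then show "A u \<in> null_space h" using null_iff by blast
qed

lemma sa_inv: "selfadjoint_op h A \<Longrightarrow> \<forall>u\<in>null_space h. A u \<in> null_space h"
proof
  fix u assume sa: "selfadjoint_op h A" and "u \<in> null_space h"
  then have "h u u = 0" by (simp add: null_iff)
  then have "h u (A (A u)) = 0" by (rule null_zero2)
  then show "A u \<in> null_space h" using sa unfolding selfadjoint_op_def by (simp add: null_iff)
qed

lemma met_inv: "metric_op h A \<Longrightarrow> \<forall>u\<in>null_space h. A u \<in> null_space h"
  unfolding metric_op_def by (simp add: null_iff)

lemma met_bounded: "metric_op h A \<Longrightarrow> bounded_op h A"
  unfolding metric_op_def bounded_op_def snorm_def by (intro exI[of _ 1]) auto


lemma scaleR_vec: "r *\<^sub>R (x::complex^'n) = complex_of_real r *s x"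
  unfolding vec_eq_iff by (simp add: scaleR_conv_of_real[where 'a=complex])

lemma linear_hL: "linear (\<lambda>x. h x e)"
  by (rule linearI) (simp_all add: h_addL scaleR_vec h_scaleL scaleR_conv_of_real)

lemma h_sumL: "finite S \<Longrightarrow> h (sum f S) y = (\<Sum>i\<in>S. h (f i) y)"
  using linear_sum[OF linear_hL, of f S y] by simp

lemma h_expand: "h x y = (\<Sum>j\<in>UNIV. cnj (y$j) * h x (axis j 1))"
proof -
  have "h x y = cnj (h y x)" by (rule h_herm)
  also have "h y x = (\<Sum>j\<in>UNIV. h ((y$j) *s axis j 1) x)"
    by (subst (1) basis_expansion[of y, symmetric]) (simp add: h_sumL)
  also have "cnj \<dots> = (\<Sum>j\<in>UNIV. cnj (y$j) * h x (axis j 1))"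
  proof -
    have "cnj (h e x) = h x e" for e using h_herm[of e x] by simp
    then show ?thesis by (simp add: h_scaleL)
  qed
  finally show ?thesis .
qed

lemma cont_form:
  assumes "bounded_linear B"
  shows "continuous_on S (\<lambda>u. h (B u) (B u))"
proof -
  have cB: "continuous_on S B" using assms linear_continuous_on by blast
  have ch: "continuous_on S (\<lambda>u. h (B u) e)" for e
  proof -
    have "bounded_linear (\<lambda>x. h x e)" using linear_hL linear_conv_bounded_linear by blast
    then have "continuous_on UNIV (\<lambda>x. h x e)" using linear_continuous_on by blast
    then show ?thesis using continuous_on_compose2[OF _ cB] by blast
  qed
  have cc: "continuous_on S (\<lambda>u. cnj (B u $ j))" for j
    by (intro continuous_intros cB)
  show ?thesis
    by (subst h_expand) (intro continuous_on_sum continuous_on_mult cc ch)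
qed

lemma snorm_scaleR: "snorm h (r *\<^sub>R x) = \<bar>r\<bar> * snorm h x"
proof -
  have "h (r *\<^sub>R x) (r *\<^sub>R x) = complex_of_real (r^2) * h x x"
    by (simp add: scaleR_vec h_scaleL h_scaleR power2_eq_square)
  then have "Re (h (r *\<^sub>R x) (r *\<^sub>R x)) = r^2 * Re (h x x)" by simp
  then show ?thesis unfolding snorm_def by (simp add: real_sqrt_mult)
qed

lemma snorm_shift: "n \<in> null_space h \<Longrightarrow> snorm h (x + n) = snorm h x"
  unfolding snorm_def using h_shift[of n n x x] by simp

lemma snorm_nonneg: "snorm h x \<ge> 0" unfolding snorm_def using h_pos by simp

lemma snorm_zero_iff: "snorm h x = 0 \<longleftrightarrow> x \<in> null_space h"
proof -
  have "snorm h x = 0 \<longleftrightarrow> Re (h x x) = 0" unfolding snorm_def by simp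
  also have "\<dots> \<longleftrightarrow> h x x = 0" by (subst (2) h_real) simp
  finally show ?thesis by (simp add: null_iff)
qed

lemma null_subspace: "subspace (null_space h)"
  unfolding subspace_def
proof (intro conjI ballI allI)
  show "0 \<in> null_space h" using null_iff h_zeroL by blast
next
  fix x y assume "x \<in> null_space h" "y \<in> null_space h"
  then have "h x x = 0" "h y y = 0" "h x y = 0" "h y x = 0"
    using null_iff null_zero null_zero2 by blast+
  then show "x + y \<in> null_space h" using null_iff by (simp add: h_addL h_addR)
next
  fix c :: real and x assume "x \<in> null_space h"
  then show "c *\<^sub>R x \<in> null_space h" using null_iff
    by (simp add: scaleR_vec h_scaleL h_scaleR)
qed




lemma sa_bounded:
  assumes lin: "clinear_op A" and sa: "selfadjoint_op h A"
  shows "bounded_op h A"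
proof -
  define N where "N = null_space h"
  have inv: "\<forall>u\<in>N. A u \<in> N" using sa_inv[OF sa] N_def by simp
  have Aadd: "A (x + y) = A x + A y" and Asc: "A (c *s x) = c *s A x" for x y c
    using lin unfolding clinear_op_def Vector_Spaces.linear_def module_hom_def module_hom_axioms_def
    by auto
  have linA: "linear A"
    by (rule linearI) (simp_all add: Aadd scaleR_vec Asc)
  then have blA: "bounded_linear A" using linear_conv_bounded_linear by blast
  have A0: "A 0 = 0" using linA linear_0 by blast
  have sN: "span N = N" using null_subspace N_def span_eq_iff by blast
  define K where "K = sphere 0 1 \<inter> {w. \<forall>y\<in>N. w \<bullet> y = 0}"
  have "{w. \<forall>y\<in>N. w \<bullet> y = 0} = (\<Inter>y\<in>N. {w. y \<bullet> w = 0})" by (auto simp: inner_commute)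
  then have "closed {w. \<forall>y\<in>N. w \<bullet> y = 0}" by (simp add: closed_INT closed_hyperplane)
  then have cK: "compact K" unfolding K_def by (simp add: compact_Int_closed)
  have csn: "continuous_on K (\<lambda>w. snorm h (B w))" if "bounded_linear B" for B
    unfolding snorm_def
    by (intro continuous_on_compose2[OF continuous_on_real_sqrt] continuous_intros
        cont_form[OF that]) auto
  have idbl: "bounded_linear (\<lambda>x::complex^'n. x)" by (rule bounded_linear_ident)
  have orthK: "z /\<^sub>R norm z \<in> K" if "z \<noteq> 0" "\<forall>y\<in>N. z \<bullet> y = 0" for z
    using that unfolding K_def by auto
  have claim: "\<exists>c>0. \<forall>z. (\<forall>y\<in>N. z \<bullet> y = 0) \<longrightarrow> snorm h (A z) \<le> c * snorm h z"
  proof (cases "K = {}")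
    case True
    have "z = 0" if "\<forall>y\<in>N. z \<bullet> y = 0" for z
      using orthK[of z] that True by blast
    show ?thesis
    proof (intro exI[of _ 1] conjI allI impI)
      fix z assume "\<forall>y\<in>N. z \<bullet> y = 0"
      then have "z = 0" by fact
      then show "snorm h (A z) \<le> 1 * snorm h z" by (simp add: A0 snorm_def h_zeroL)
    qed simp
  next
    case False
    have c1: "continuous_on K (\<lambda>w. snorm h w)" using csn[OF idbl] by simp
    obtain w0 where w0: "w0 \<in> K" "\<forall>y\<in>K. snorm h w0 \<le> snorm h y"
      using continuous_attains_inf[OF cK False c1] by auto
    obtain w1 where w1: "w1 \<in> K" "\<forall>y\<in>K. snorm h (A y) \<le> snorm h (A w1)"
      using continuous_attains_sup[OF cK False csn[OF blA]] by auto
    define m where "m = snorm h w0"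
    define M where "M = snorm h (A w1)"
    have "w0 \<notin> N"
    proof
      assume "w0 \<in> N"
      then have "w0 \<bullet> w0 = 0" using w0(1) unfolding K_def by auto
      then show False using w0(1) unfolding K_def by auto
    qed
    then have mpos: "m > 0" unfolding m_def N_def
      using snorm_zero_iff snorm_nonneg by (metis less_eq_real_def)
    have M0: "M \<ge> 0" unfolding M_def by (rule snorm_nonneg)
    show ?thesis
    proof (intro exI[of _ "(M + 1) / m"] conjI allI impI)
      show "(M + 1) / m > 0" using mpos M0 by simp
      fix z assume zo: "\<forall>y\<in>N. z \<bullet> y = 0"
      show "snorm h (A z) \<le> (M + 1) / m * snorm h z"
      proof (cases "z = 0")
        case True then show ?thesis using A0 by (simp add: snorm_def h_zeroL)
      next
        case False
        define w where "w = z /\<^sub>R norm z"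
        have wK: "w \<in> K" using orthK[OF False zo] w_def by simp
        have zw: "z = norm z *\<^sub>R w" using False w_def by simp
        have "snorm h (A z) = norm z * snorm h (A w)"
          by (subst zw) (simp add: linear_scale[OF linA] snorm_scaleR)
        also have "\<dots> \<le> norm z * M" using w1(2) wK M_def by (simp add: mult_left_mono)
        also have "\<dots> \<le> norm z * (M + 1)" by (simp add: mult_left_mono)
        also have "\<dots> = (M + 1) / m * (norm z * m)" using mpos by simp
        also have "\<dots> \<le> (M + 1) / m * (norm z * snorm h w)"
          using w0(2) wK m_def mpos M0 by (intro mult_left_mono) (auto simp: mult_left_mono)
        also have "norm z * snorm h w = snorm h z"
          by (subst (2) zw) (simp add: snorm_scaleR)
        finally show ?thesis .
      qed
    qed
  qed
  then obtain c where c: "c > 0" "\<forall>z. (\<forall>y\<in>N. z \<bullet> y = 0) \<longrightarrow> snorm h (A z) \<le> c * snorm h z"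
    by blast
  show ?thesis unfolding bounded_op_def
  proof (intro exI[of _ c] conjI allI)
    show "c > 0" by fact
    fix u
    obtain y z where yz: "y \<in> span N" "\<And>w. w \<in> span N \<Longrightarrow> orthogonal z w" "u = y + z"
      using orthogonal_subspace_decomp_exists[of N u] by metis
    have yN: "y \<in> N" using yz(1) sN by simp
    have zo: "\<forall>w\<in>N. z \<bullet> w = 0" using yz(2) sN by (simp add: orthogonal_def)
    have "snorm h (A u) = snorm h (A z + A y)" using yz(3) Aadd by (simp add: add.commute)
    also have "\<dots> = snorm h (A z)" using inv yN snorm_shift N_def by simp
    also have "\<dots> \<le> c * snorm h z" using c zo by blast
    also have "snorm h z = snorm h u" using yz(3) yN snorm_shift N_def by (simp add: add.commute)
    finally show "snorm h (A u) \<le> c * snorm h u" .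
  qed
qed


end

theorem lemma2p4:
  fixes h :: "complex^'n \<Rightarrow> complex^'n \<Rightarrow> complex"
    and A :: "complex^'n \<Rightarrow> complex^'n"
  assumes "semiunitary h" and "clinear_op A"
  shows "(selfadjoint_op h A \<longleftrightarrow> bounded_op h A \<and> quot_selfadjoint h (induced_op h A))
       \<and> (metric_op h A \<longleftrightarrow> bounded_op h A \<and> quot_metric h (induced_op h A))"
proof -
  interpret su_ctx h by unfold_locales (rule assms(1))
  show ?thesis
    using sa_bounded[OF assms(2)] quot_sa_iff[OF assms(2)] quot_met_iff[OF assms(2)]
      bounded_inv sa_inv met_inv met_bounded
    by blast
qed

end
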